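(* Let $X$ be a random variable, $Z$ a random variable jointly distributed with $X$, and $f,g$ real functions with $\mathbb{E}[f(X)^2],\mathbb{E}[g(X)^2]<\infty$. Then $$\operatorname{Var}\mathbb{E}[f(X)\mid Z]-\operatorname{Var}\mathbb{E}[g(X)\mid Z]\ge\frac12\Big\{\operatorname{Var}[f(X)]-\operatorname{Var}[g(X)]-\sqrt{(\operatorname{Var}[f(X)]+\operatorname{Var}[g(X)])^2-4\operatorname{Cov}(f(X),g(X))^2}\Big\}$$ and $$\operatorname{Var}\mathbb{E}[f(X)\mid Z]-\operatorname{Var}\mathbb{E}[g(X)\mid Z]\le\frac12\Big\{\operatorname{Var}[f(X)]-\operatorname{Var}[g(X)]+\sqrt{(\operatorname{Var}[f(X)]+\operatorname{Var}[g(X)])^2-4\operatorname{Cov}(f(X),g(X))^2}\Big\}.$$ *)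

theory Defs
  imports "HOL-Probability.Probability"
begin

definition covariance :: "'a measure \<Rightarrow> ('a \<Rightarrow> real) \<Rightarrow> ('a \<Rightarrow> real) \<Rightarrow> real" where
  "covariance M U V =
     (\<integral>x. (U x - (\<integral>y. U y \<partial>M)) * (V x - (\<integral>y. V y \<partial>M)) \<partial>M)"

definition var :: "'a measure \<Rightarrow> ('a \<Rightarrow> real) \<Rightarrow> real" where
  "var M U = (\<integral>x. (U x - (\<integral>y. U y \<partial>M))\<^sup>2 \<partial>M)"

definition cond_exp_given :: "'a measure \<Rightarrow> ('a \<Rightarrow> 'c) \<Rightarrow> 'c measure \<Rightarrow> ('a \<Rightarrow> real) \<Rightarrow> ('a \<Rightarrow> real)" where
  "cond_exp_given M Z K U = real_cond_exp M (vimage_algebra (space M) Z K) U"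

end

theory Submission
  imports Defs
begin

lemma four_ab: fixes a b :: real shows "4*a*b \<le> (a+b)\<^sup>2"
proof -
  have "(a+b)\<^sup>2 - 4*a*b = (a-b)\<^sup>2" by (simp add: power2_eq_square algebra_simps)
  moreover have "0 \<le> (a-b)\<^sup>2" by simp
  ultimately show ?thesis by linarith
qed

lemma alg_c2:
  fixes p q p' q' r r' :: real
  assumes "0 \<le> p" "0 \<le> q" "0 \<le> p'" "0 \<le> q'" "r\<^sup>2 \<le> p * q" "r'\<^sup>2 \<le> p' * q'"
  shows "(r + r')\<^sup>2 \<le> (p + q') * (p' + q)"
proof -
  have pq0: "0 \<le> p * q" using assms(1,2) by (rule mult_nonneg_nonneg)
  have r'0: "0 \<le> r'\<^sup>2" by (rule zero_le_power2)
  have e0: "(r*r')\<^sup>2 = r\<^sup>2 * r'\<^sup>2" by (rule power_mult_distrib)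
  have m: "r\<^sup>2 * r'\<^sup>2 \<le> (p*q)*(p'*q')" by (rule mult_mono[OF assms(5) assms(6) pq0 r'0])
  have eq: "(p*q)*(p'*q') = (p*p')*(q*q')" by (simp only: mult.assoc mult.left_commute)
  have f: "4*((p*p')*(q*q')) \<le> (p*p' + q*q')\<^sup>2" using four_ab[of "p*p'" "q*q'"] by (simp only: mult.assoc)
  have e1: "(2*\<bar>r*r'\<bar>)\<^sup>2 = 4*(r*r')\<^sup>2" by (simp add: power_mult_distrib)
  have g: "(2*\<bar>r*r'\<bar>)\<^sup>2 \<le> (p*p' + q*q')\<^sup>2" unfolding e1 e0 using m eq f by linarith
  have pp0: "0 \<le> p*p' + q*q'" using assms(1-4) by (simp add: add_nonneg_nonneg mult_nonneg_nonneg)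
  have h: "2*\<bar>r*r'\<bar> \<le> p*p' + q*q'" by (rule power2_le_imp_le[OF g pp0])
  have e: "(r + r')\<^sup>2 = r\<^sup>2 + r'\<^sup>2 + 2*(r*r')" by (simp add: power2_eq_square algebra_simps)
  have e2: "(p + q') * (p' + q) = p*q + p'*q' + (p*p' + q*q')" by (simp add: algebra_simps)
  have "2*(r*r') \<le> 2*\<bar>r*r'\<bar>" by simp
  thus ?thesis unfolding e e2 using h assms(5,6) by linarith
qed

lemma alg_main:
  fixes p q p' q' r r' :: real
  assumes "0 \<le> p" "0 \<le> q" "0 \<le> p'" "0 \<le> q'" "r\<^sup>2 \<le> p * q" "r'\<^sup>2 \<le> p' * q'"
  defines "S \<equiv> sqrt (((p+p') + (q+q'))\<^sup>2 - 4 * (r+r')\<^sup>2)"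
  shows "p - q \<ge> (1/2) * ((p+p') - (q+q') - S) \<and> p - q \<le> (1/2) * ((p+p') - (q+q') + S)"
proof -
  have c: "(r + r')\<^sup>2 \<le> (p + q') * (p' + q)" by (rule alg_c2[OF assms(1-6)])
  have "((p+q') - (p'+q))\<^sup>2 \<le> ((p+p') + (q+q'))\<^sup>2 - 4 * (r+r')\<^sup>2"
    using c by (simp add: power2_eq_square algebra_simps)
  hence "sqrt (((p+q') - (p'+q))\<^sup>2) \<le> S" unfolding S_def by (rule real_sqrt_le_mono)
  hence "\<bar>(p+q') - (p'+q)\<bar> \<le> S" by simp
  moreover have "p - q - (1/2)*((p+p')-(q+q')) = (1/2)*((p+q')-(p'+q))" by (simp add: field_simps)
  ultimately have h1: "p+q'-(p'+q) \<le> S" and h2: "-(p+q'-(p'+q)) \<le> S"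
    and h3: "p - q - (1/2)*((p+p')-(q+q')) = (1/2)*((p+q')-(p'+q))" unfolding abs_le_iff by auto
  show ?thesis
  proof
    show "p - q \<ge> (1/2) * ((p+p') - (q+q') - S)" using h1 h2 by (simp add: field_simps)
    show "p - q \<le> (1/2) * ((p+p') - (q+q') + S)" using h1 h2 by (simp add: field_simps)
  qed
qed
lemma quad_disc:
  fixes A B C :: real
  assumes h: "\<And>t. 0 \<le> A + 2*t*B + t\<^sup>2*C" and C: "0 \<le> C"
  shows "B\<^sup>2 \<le> A*C"
proof (cases "C = 0")
  case True
  have "B = 0"
  proof (rule ccontr)
    assume "B \<noteq> 0"
    have "0 \<le> A + 2*(-(A+1)/(2*B))*B + (-(A+1)/(2*B))\<^sup>2*C" by (rule h)
    moreover have "2*(-(A+1)/(2*B))*B = -(A+1)" using \<open>B \<noteq> 0\<close> by simp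
    ultimately show False using True by simp
  qed
  thus ?thesis using True by simp
next
  case False
  hence Cp: "C > 0" using C by simp
  have "0 \<le> A + 2*(-B/C)*B + (-B/C)\<^sup>2*C" by (rule h)
  hence "0 \<le> (A*C - B\<^sup>2)/C" using Cp by (simp add: field_simps power2_eq_square)
  thus ?thesis using Cp by (simp add: divide_nonneg_pos zero_le_divide_iff)
qed

lemma L2_prod_integrable:
  fixes f g :: "'a \<Rightarrow> real"
  assumes [measurable]: "f \<in> borel_measurable M" "g \<in> borel_measurable M"
    and "integrable M (\<lambda>x. (f x)\<^sup>2)" "integrable M (\<lambda>x. (g x)\<^sup>2)"
  shows "integrable M (\<lambda>x. f x * g x)"
proof (rule Bochner_Integration.integrable_bound[of _ "\<lambda>x. (f x)\<^sup>2 + (g x)\<^sup>2"])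
  show "integrable M (\<lambda>x. (f x)\<^sup>2 + (g x)\<^sup>2)" using assms by auto
  show "(\<lambda>x. f x * g x) \<in> borel_measurable M" by measurable
  show "AE x in M. norm (f x * g x) \<le> norm ((f x)\<^sup>2 + (g x)\<^sup>2)"
  proof (rule AE_I2)
    fix x
    have "0 \<le> (\<bar>f x\<bar> - \<bar>g x\<bar>)\<^sup>2" by simp
    hence "2 * \<bar>f x\<bar> * \<bar>g x\<bar> \<le> (f x)\<^sup>2 + (g x)\<^sup>2" by (simp add: power2_eq_square algebra_simps)
    moreover have "0 \<le> \<bar>f x\<bar> * \<bar>g x\<bar>" by simp
    moreover have "norm (f x * g x) = \<bar>f x\<bar> * \<bar>g x\<bar>" by (simp add: abs_mult)
    moreover have "norm ((f x)\<^sup>2 + (g x)\<^sup>2) = (f x)\<^sup>2 + (g x)\<^sup>2" by simp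
    ultimately show "norm (f x * g x) \<le> norm ((f x)\<^sup>2 + (g x)\<^sup>2)"
      by linarith
  qed
qed

lemma CS_integral:
  fixes f g :: "'a \<Rightarrow> real"
  assumes [measurable]: "f \<in> borel_measurable M" "g \<in> borel_measurable M"
    and i: "integrable M (\<lambda>x. (f x)\<^sup>2)" "integrable M (\<lambda>x. (g x)\<^sup>2)"
  shows "(\<integral>x. f x * g x \<partial>M)\<^sup>2 \<le> (\<integral>x. (f x)\<^sup>2 \<partial>M) * (\<integral>x. (g x)\<^sup>2 \<partial>M)"
proof -
  have ifg: "integrable M (\<lambda>x. f x * g x)" by (rule L2_prod_integrable[OF assms])
  have "(\<integral>x. f x * g x \<partial>M)\<^sup>2 \<le> (\<integral>x. (f x)\<^sup>2 \<partial>M) * (\<integral>x. (g x)\<^sup>2 \<partial>M)"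
  proof (rule quad_disc)
    fix t :: real
    have "0 \<le> (\<integral>x. (f x + t * g x)\<^sup>2 \<partial>M)" by simp
    also have "(\<integral>x. (f x + t * g x)\<^sup>2 \<partial>M) = (\<integral>x. (f x)\<^sup>2 + 2*t*(f x * g x) + t\<^sup>2 * (g x)\<^sup>2 \<partial>M)"
      by (rule Bochner_Integration.integral_cong) (auto simp: power2_eq_square algebra_simps)
    also have "\<dots> = (\<integral>x. (f x)\<^sup>2 \<partial>M) + 2*t*(\<integral>x. f x * g x \<partial>M) + t\<^sup>2*(\<integral>x. (g x)\<^sup>2 \<partial>M)"
      using i ifg by simp
    finally show "0 \<le> (\<integral>x. (f x)\<^sup>2 \<partial>M) + 2*t*(\<integral>x. f x * g x \<partial>M) + t\<^sup>2*(\<integral>x. (g x)\<^sup>2 \<partial>M)" .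
  next
    show "0 \<le> (\<integral>x. (g x)\<^sup>2 \<partial>M)" by simp
  qed
  thus ?thesis .
qed

lemma (in prob_space) cov_expand:
  fixes x y :: "'a \<Rightarrow> real"
  assumes [measurable]: "x \<in> borel_measurable M" "y \<in> borel_measurable M"
    and i: "integrable M (\<lambda>z. (x z)\<^sup>2)" "integrable M (\<lambda>z. (y z)\<^sup>2)"
  shows "covariance M x y = (\<integral>z. x z * y z \<partial>M) - (\<integral>z. x z \<partial>M) * (\<integral>z. y z \<partial>M)"
proof -
  have ix: "integrable M x" by (rule square_integrable_imp_integrable[OF assms(1) i(1)])
  have iy: "integrable M y" by (rule square_integrable_imp_integrable[OF assms(2) i(2)])
  have ixy: "integrable M (\<lambda>z. x z * y z)" by (rule L2_prod_integrable[OF assms])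
  define a where "a = (\<integral>z. x z \<partial>M)"
  define b where "b = (\<integral>z. y z \<partial>M)"
  have "covariance M x y = (\<integral>z. x z * y z - b * x z - a * y z + a * b \<partial>M)"
    unfolding covariance_def a_def[symmetric] b_def[symmetric]
    by (rule Bochner_Integration.integral_cong) (simp_all add: algebra_simps)
  also have "\<dots> = (\<integral>z. x z * y z \<partial>M) - b * (\<integral>z. x z \<partial>M) - a * (\<integral>z. y z \<partial>M) + a * b"
    using ix iy ixy by (simp add: prob_space)
  finally show ?thesis by (simp add: a_def b_def)
qed

lemma (in prob_space) var_expand:
  fixes x :: "'a \<Rightarrow> real"
  assumes [measurable]: "x \<in> borel_measurable M" and i: "integrable M (\<lambda>z. (x z)\<^sup>2)"
  shows "var M x = (\<integral>z. (x z)\<^sup>2 \<partial>M) - (\<integral>z. x z \<partial>M)\<^sup>2"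
proof -
  have "var M x = covariance M x x" unfolding var_def covariance_def by (simp add: power2_eq_square)
  also have "\<dots> = (\<integral>z. (x z)\<^sup>2 \<partial>M) - (\<integral>z. x z \<partial>M)\<^sup>2"
    using cov_expand[OF assms(1) assms(1) i i] by (simp add: power2_eq_square)
  finally show ?thesis .
qed

lemma (in prob_space) shift_sq_integrable:
  fixes x :: "'a \<Rightarrow> real"
  assumes [measurable]: "x \<in> borel_measurable M" and i: "integrable M (\<lambda>z. (x z)\<^sup>2)"
  shows "integrable M (\<lambda>z. (x z - c)\<^sup>2)"
proof -
  have ix: "integrable M x" by (rule square_integrable_imp_integrable[OF assms(1) i(1)])
  have "integrable M (\<lambda>z. (x z)\<^sup>2 - 2 * c * x z + c\<^sup>2)" using ix i by auto
  thus ?thesis by (simp add: power2_eq_square algebra_simps)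
qed

lemma (in prob_space) CS_cov:
  fixes x y :: "'a \<Rightarrow> real"
  assumes [measurable]: "x \<in> borel_measurable M" "y \<in> borel_measurable M"
    and i: "integrable M (\<lambda>z. (x z)\<^sup>2)" "integrable M (\<lambda>z. (y z)\<^sup>2)"
  shows "(covariance M x y)\<^sup>2 \<le> var M x * var M y"
proof -
  have m1: "(\<lambda>z. x z - (\<integral>w. x w \<partial>M)) \<in> borel_measurable M" by measurable
  have m2: "(\<lambda>z. y z - (\<integral>w. y w \<partial>M)) \<in> borel_measurable M" by measurable
  show ?thesis
    unfolding covariance_def var_def
    by (rule CS_integral[OF m1 m2 shift_sq_integrable[OF assms(1) i(1)] shift_sq_integrable[OF assms(2) i(2)]])
qed

lemma (in sigma_finite_subalgebra) ce_sq_integrable: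
  fixes u :: "'a \<Rightarrow> real"
  assumes [measurable]: "u \<in> borel_measurable M" and iu: "integrable M u" and iu2: "integrable M (\<lambda>x. (u x)\<^sup>2)"
  shows "integrable M (\<lambda>x. (real_cond_exp M F u x)\<^sup>2)"
proof -
  have J: "AE x in M. (real_cond_exp M F u x)\<^sup>2 \<le> real_cond_exp M F (\<lambda>x. (u x)\<^sup>2) x"
  proof (rule real_cond_exp_jensens_inequality(2)[where I=UNIV and a=0 and b=0])
    show "integrable M u" by (rule iu)
    show "AE x in M. u x \<in> UNIV" by simp
    show "UNIV = {0::real<..<0} \<or> UNIV = {0::real<..} \<or> UNIV = {..<0::real} \<or> UNIV = (UNIV::real set)" by simp
    show "integrable M (\<lambda>x. (u x)\<^sup>2)" by (rule iu2)
    show "convex_on UNIV (\<lambda>x::real. x\<^sup>2)" by (rule convex_power2)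
    show "(\<lambda>x::real. x\<^sup>2) \<in> borel_measurable borel" by measurable
  qed
  show ?thesis
  proof (rule Bochner_Integration.integrable_bound[OF real_cond_exp_int(1)[OF iu2]])
    show "(\<lambda>x. (real_cond_exp M F u x)\<^sup>2) \<in> borel_measurable M" by measurable
    show "AE x in M. norm ((real_cond_exp M F u x)\<^sup>2) \<le> norm (real_cond_exp M F (\<lambda>x. (u x)\<^sup>2) x)"
      using J by eventually_elim auto
  qed
qed

lemma L2_diff_integrable:
  fixes f g :: "'a \<Rightarrow> real"
  assumes [measurable]: "f \<in> borel_measurable M" "g \<in> borel_measurable M"
    and i: "integrable M (\<lambda>x. (f x)\<^sup>2)" "integrable M (\<lambda>x. (g x)\<^sup>2)"
  shows "integrable M (\<lambda>x. (f x - g x)\<^sup>2)"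
proof -
  have "integrable M (\<lambda>x. f x * g x)" by (rule L2_prod_integrable[OF assms])
  hence "integrable M (\<lambda>x. (f x)\<^sup>2 - 2 * (f x * g x) + (g x)\<^sup>2)" using i by auto
  thus ?thesis by (simp add: power2_eq_square algebra_simps)
qed

lemma core:
  fixes u v :: "'a \<Rightarrow> real"
  assumes PS: "prob_space M" and SA: "subalgebra M F"
    and mu[measurable]: "u \<in> borel_measurable M" and mv[measurable]: "v \<in> borel_measurable M"
    and iu2: "integrable M (\<lambda>x. (u x)\<^sup>2)" and iv2: "integrable M (\<lambda>x. (v x)\<^sup>2)"
  shows "var M (real_cond_exp M F u) - var M (real_cond_exp M F v)
           \<ge> (1/2) * (var M u - var M v - sqrt ((var M u + var M v)\<^sup>2 - 4 * (covariance M u v)\<^sup>2))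
    \<and> var M (real_cond_exp M F u) - var M (real_cond_exp M F v)
           \<le> (1/2) * (var M u - var M v + sqrt ((var M u + var M v)\<^sup>2 - 4 * (covariance M u v)\<^sup>2))"
proof -
  interpret prob_space M by (rule PS)
  interpret finite_measure_subalgebra M F by unfold_locales (rule SA)
  define cu where "cu = real_cond_exp M F u"
  define cv where "cv = real_cond_exp M F v"
  have mcu[measurable]: "cu \<in> borel_measurable M" and mcv[measurable]: "cv \<in> borel_measurable M"
    unfolding cu_def cv_def by simp_all
  have mcuF: "cu \<in> borel_measurable F" and mcvF: "cv \<in> borel_measurable F"
    unfolding cu_def cv_def by simp_all
  have iu: "integrable M u" by (rule square_integrable_imp_integrable) (simp_all add: iu2)
  have iv: "integrable M v" by (rule square_integrable_imp_integrable) (simp_all add: iv2)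
  have icu2: "integrable M (\<lambda>x. (cu x)\<^sup>2)" unfolding cu_def by (rule ce_sq_integrable) (simp_all add: iu iu2)
  have icv2: "integrable M (\<lambda>x. (cv x)\<^sup>2)" unfolding cv_def by (rule ce_sq_integrable) (simp_all add: iv iv2)
  have Ecu: "(\<integral>x. cu x \<partial>M) = (\<integral>x. u x \<partial>M)" unfolding cu_def by (rule real_cond_exp_int(2)[OF iu])
  have Ecv: "(\<integral>x. cv x \<partial>M) = (\<integral>x. v x \<partial>M)" unfolding cv_def by (rule real_cond_exp_int(2)[OF iv])
  have i1: "integrable M (\<lambda>x. cu x * v x)" by (rule L2_prod_integrable) (simp_all add: icu2 iv2)
  have i2: "integrable M (\<lambda>x. cv x * u x)" by (rule L2_prod_integrable) (simp_all add: icv2 iu2)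
  have i3: "integrable M (\<lambda>x. cu x * u x)" by (rule L2_prod_integrable) (simp_all add: icu2 iu2)
  have i4: "integrable M (\<lambda>x. cv x * v x)" by (rule L2_prod_integrable) (simp_all add: icv2 iv2)
  have i5: "integrable M (\<lambda>x. cu x * cv x)" by (rule L2_prod_integrable) (simp_all add: icu2 icv2)
  have i6: "integrable M (\<lambda>x. u x * v x)" by (rule L2_prod_integrable) (simp_all add: iu2 iv2)
  have k1: "(\<integral>x. cu x * v x \<partial>M) = (\<integral>x. cu x * cv x \<partial>M)"
    using real_cond_exp_intg(2)[OF i1 mcuF] unfolding cv_def by simp
  have k2: "(\<integral>x. cv x * u x \<partial>M) = (\<integral>x. cu x * cv x \<partial>M)"
    using real_cond_exp_intg(2)[OF i2 mcvF] unfolding cu_def by (simp add: mult.commute)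
  have k3: "(\<integral>x. cu x * u x \<partial>M) = (\<integral>x. (cu x)\<^sup>2 \<partial>M)"
    using real_cond_exp_intg(2)[OF i3 mcuF] unfolding cu_def by (simp add: power2_eq_square)
  have k4: "(\<integral>x. cv x * v x \<partial>M) = (\<integral>x. (cv x)\<^sup>2 \<partial>M)"
    using real_cond_exp_intg(2)[OF i4 mcvF] unfolding cv_def by (simp add: power2_eq_square)
  define p where "p = var M cu"
  define q where "q = var M cv"
  define r where "r = covariance M cu cv"
  define p' where "p' = (\<integral>x. (u x - cu x)\<^sup>2 \<partial>M)"
  define q' where "q' = (\<integral>x. (v x - cv x)\<^sup>2 \<partial>M)"
  define r' where "r' = (\<integral>x. (u x - cu x) * (v x - cv x) \<partial>M)"
  have p'e: "p' = (\<integral>x. (u x)\<^sup>2 \<partial>M) - (\<integral>x. (cu x)\<^sup>2 \<partial>M)"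
  proof -
    have "p' = (\<integral>x. (u x)\<^sup>2 - 2 * (cu x * u x) + (cu x)\<^sup>2 \<partial>M)" unfolding p'_def
      by (rule Bochner_Integration.integral_cong) (simp_all add: power2_eq_square algebra_simps)
    also have "\<dots> = (\<integral>x. (u x)\<^sup>2 \<partial>M) - 2 * (\<integral>x. cu x * u x \<partial>M) + (\<integral>x. (cu x)\<^sup>2 \<partial>M)"
      using iu2 i3 icu2 by simp
    finally show ?thesis using k3 by simp
  qed
  have q'e: "q' = (\<integral>x. (v x)\<^sup>2 \<partial>M) - (\<integral>x. (cv x)\<^sup>2 \<partial>M)"
  proof -
    have "q' = (\<integral>x. (v x)\<^sup>2 - 2 * (cv x * v x) + (cv x)\<^sup>2 \<partial>M)" unfolding q'_def
      by (rule Bochner_Integration.integral_cong) (simp_all add: power2_eq_square algebra_simps)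
    also have "\<dots> = (\<integral>x. (v x)\<^sup>2 \<partial>M) - 2 * (\<integral>x. cv x * v x \<partial>M) + (\<integral>x. (cv x)\<^sup>2 \<partial>M)"
      using iv2 i4 icv2 by simp
    finally show ?thesis using k4 by simp
  qed
  have r'e: "r' = (\<integral>x. u x * v x \<partial>M) - (\<integral>x. cu x * cv x \<partial>M)"
  proof -
    have "r' = (\<integral>x. u x * v x - cv x * u x - cu x * v x + cu x * cv x \<partial>M)" unfolding r'_def
      by (rule Bochner_Integration.integral_cong) (simp_all add: algebra_simps)
    also have "\<dots> = (\<integral>x. u x * v x \<partial>M) - (\<integral>x. cv x * u x \<partial>M) - (\<integral>x. cu x * v x \<partial>M) + (\<integral>x. cu x * cv x \<partial>M)"
      using i1 i2 i5 i6 by simp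
    finally show ?thesis using k1 k2 by simp
  qed
  have vu: "var M u = p + p'"
    using var_expand[of u] var_expand[of cu] iu2 icu2 Ecu unfolding p_def p'e by simp
  have vv: "var M v = q + q'"
    using var_expand[of v] var_expand[of cv] iv2 icv2 Ecv unfolding q_def q'e by simp
  have cuv: "covariance M u v = r + r'"
    using cov_expand[of u v] cov_expand[of cu cv] iu2 iv2 icu2 icv2 Ecu Ecv unfolding r_def r'e by simp
  have p0: "0 \<le> p" unfolding p_def var_def by simp
  have q0: "0 \<le> q" unfolding q_def var_def by simp
  have p'0: "0 \<le> p'" unfolding p'_def by simp
  have q'0: "0 \<le> q'" unfolding q'_def by simp
  have rr: "r\<^sup>2 \<le> p * q" unfolding r_def p_def q_def by (rule CS_cov) (simp_all add: icu2 icv2)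
  have rr': "r'\<^sup>2 \<le> p' * q'" unfolding r'_def p'_def q'_def
  proof (rule CS_integral)
    show "(\<lambda>x. u x - cu x) \<in> borel_measurable M" by measurable
    show "(\<lambda>x. v x - cv x) \<in> borel_measurable M" by measurable
    show "integrable M (\<lambda>x. (u x - cu x)\<^sup>2)" by (rule L2_diff_integrable[OF mu mcu iu2 icu2])
    show "integrable M (\<lambda>x. (v x - cv x)\<^sup>2)" by (rule L2_diff_integrable[OF mv mcv iv2 icv2])
  qed
  note A = alg_main[OF p0 q0 p'0 q'0 rr rr']
  have e1: "var M (real_cond_exp M F u) = p" unfolding p_def cu_def ..
  have e2: "var M (real_cond_exp M F v) = q" unfolding q_def cv_def ..
  show ?thesis unfolding e1 e2 vu vv cuv using A by simp
qed

theorem lemma5: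
  fixes M :: "'a measure" and N :: "'b measure" and K :: "'c measure"
    and X :: "'a \<Rightarrow> 'b" and Z :: "'a \<Rightarrow> 'c" and f g :: "'b \<Rightarrow> real"
  assumes "prob_space M"
    and "X \<in> measurable M N" and "Z \<in> measurable M K"
    and "f \<in> borel_measurable N" and "g \<in> borel_measurable N"
    and "integrable M (\<lambda>x. (f (X x))\<^sup>2)" and "integrable M (\<lambda>x. (g (X x))\<^sup>2)"
  shows "var M (cond_exp_given M Z K (\<lambda>x. f (X x))) - var M (cond_exp_given M Z K (\<lambda>x. g (X x)))
           \<ge> (1/2) * (var M (\<lambda>x. f (X x)) - var M (\<lambda>x. g (X x))
              - sqrt ((var M (\<lambda>x. f (X x)) + var M (\<lambda>x. g (X x)))\<^sup>2
                      - 4 * (covariance M (\<lambda>x. f (X x)) (\<lambda>x. g (X x)))\<^sup>2))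
    \<and> var M (cond_exp_given M Z K (\<lambda>x. f (X x))) - var M (cond_exp_given M Z K (\<lambda>x. g (X x)))
           \<le> (1/2) * (var M (\<lambda>x. f (X x)) - var M (\<lambda>x. g (X x))
              + sqrt ((var M (\<lambda>x. f (X x)) + var M (\<lambda>x. g (X x)))\<^sup>2
                      - 4 * (covariance M (\<lambda>x. f (X x)) (\<lambda>x. g (X x)))\<^sup>2))"
    unfolding cond_exp_given_def
proof (rule core)
  show "subalgebra M (vimage_algebra (space M) Z K)"
    unfolding subalgebra_def
  proof
    show "space (vimage_algebra (space M) Z K) = space M" by simp
    show "sets (vimage_algebra (space M) Z K) \<subseteq> sets M"
      unfolding sets_vimage_algebra
      using measurable_sets[OF assms(3)] by (intro sets.sigma_sets_subset) auto
  qed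
next
  show "prob_space M" by (rule assms(1))
next
  show "(\<lambda>x. f (X x)) \<in> borel_measurable M" by (rule measurable_compose[OF assms(2) assms(4)])
next
  show "(\<lambda>x. g (X x)) \<in> borel_measurable M" by (rule measurable_compose[OF assms(2) assms(5)])
next
  show "integrable M (\<lambda>x. (f (X x))\<^sup>2)" by (rule assms(6))
next
  show "integrable M (\<lambda>x. (g (X x))\<^sup>2)" by (rule assms(7))
qed

end
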